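(* Let $\mathbf{S}=\mathbf{V}\boldsymbol{\Lambda}\mathbf{V}^{\mathsf{H}}$ and $\hat{\mathbf{S}}$ be $N\times N$ graph shift operators. Let $\mathbf{E}=\mathbf{S}-\mathbf{P}_0^{\mathsf{T}}\hat{\mathbf{S}}\mathbf{P}_0$, where $\mathbf{P}_0\in\mathcal{P}$ attains $\min_{\mathbf{P}\in\mathcal{P}}\|\mathbf{S}-\mathbf{P}^{\mathsf{T}}\hat{\mathbf{S}}\mathbf{P}\|$ (the absolute perturbation modulo permutation), with eigendecomposition $\mathbf{E}=\mathbf{U}\mathbf{M}\mathbf{U}^{\mathsf{H}}$, and assume $$\|\mathbf{S}-\hat{\mathbf{S}}\|_{\mathcal{P}}=\|\mathbf{E}\|\le\varepsilon.$$ Then for any Lipschitz filter $\mathbf{h}$ with Lipschitz constant $C$, $$\|\mathbf{H}(\mathbf{S})-\mathbf{H}(\hat{\mathbf{S}})\|_{\mathcal{P}}\le C\left(1+\delta\sqrt{N}\right)\varepsilon+\mathcal{O}(\varepsilon^2),$$ where $\delta:=(\|\mathbf{U}-\mathbf{V}\|_2+1)^2-1$ is the eigenvector misalignment between $\mathbf{S}$ and $\mathbf{E}$.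
   Context: A graph shift operator is a real symmetric $N\times N$ matrix; $\mathbf{S}=\mathbf{V}\boldsymbol{\Lambda}\mathbf{V}^{\mathsf{H}}$ with $\mathbf{V}$ orthonormal eigenvectors and $\boldsymbol{\Lambda}$ diagonal eigenvalues; likewise $\mathbf{U}$ orthonormal and $\mathbf{M}$ diagonal for $\mathbf{E}$. $\|\cdot\|$ and $\|\cdot\|_2$ denote the spectral (operator) norm for matrices and Euclidean norm for vectors. $\mathcal{P}$ is the set of $N\times N$ permutation matrices. For linear operators, $\|\mathbf{A}-\hat{\mathbf{A}}\|_{\mathcal{P}}=\min_{\mathbf{P}\in\mathcal{P}}\max_{\|\mathbf{x}\|=1}\|\mathbf{P}^{\mathsf{T}}(\mathbf{A}\mathbf{x})-\hat{\mathbf{A}}(\mathbf{P}^{\mathsf{T}}\mathbf{x})\|$. A filter is a coefficient sequence $\mathbf{h}=\{h_k\}_{k\ge0}$ defining $\mathbf{H}(\mathbf{S})=\sum_k h_k\mathbf{S}^k$ and frequency response $h(\lambda)=\sum_k h_k\lambda^k$ (an analytic function), required to satisfy $|h(\lambda)|\le1$. The filter is Lipschitz with constant $C>0$ if $|h(\lambda_2)-h(\lambda_1)|\le C|\lambda_2-\lambda_1|$ for all $\lambda_1,\lambda_2$. $\mathcal{O}(\varepsilon^2)$ denotes a term bounded by a constant times $\varepsilon^2$. *)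

theory Defs
  imports "HOL-Analysis.Analysis"
begin

(* Square real matrices of size N = CARD('n) are rendered as real^'n^'n. *)

definition spec_norm :: "real^'n^'n \<Rightarrow> real" where
  "spec_norm A = onorm (\<lambda>x. A *v x)"

primrec mat_pow :: "real^'n^'n \<Rightarrow> nat \<Rightarrow> real^'n^'n" where
  "mat_pow A 0 = mat 1"
| "mat_pow A (Suc k) = A ** mat_pow A k"

text \<open>Graph shift operator: real symmetric matrix.\<close>
definition symmetric_mat :: "real^'n^'n \<Rightarrow> bool" where
  "symmetric_mat A \<longleftrightarrow> transpose A = A"

definition diagonal_mat :: "real^'n^'n \<Rightarrow> bool" where
  "diagonal_mat D \<longleftrightarrow> (\<forall>i j. i \<noteq> j \<longrightarrow> D $ i $ j = 0)"

definition perm_mat :: "('n \<Rightarrow> 'n) \<Rightarrow> real^'n^'n" where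
  "perm_mat p = (\<chi> i j. if i = p j then 1 else 0)"

definition perm_mats :: "(real^'n^'n) set" where
  "perm_mats = {perm_mat p | p. p permutes (UNIV :: 'n set)}"

definition perm_dist :: "real^'n^'n \<Rightarrow> real^'n^'n \<Rightarrow> real" where
  "perm_dist A B = Min ((\<lambda>P. onorm (\<lambda>x. transpose P *v (A *v x) - B *v (transpose P *v x))) ` perm_mats)"

definition freq_resp :: "(nat \<Rightarrow> real) \<Rightarrow> real \<Rightarrow> real" where
  "freq_resp h t = (\<Sum>k. h k * t ^ k)"

definition graph_filter :: "(nat \<Rightarrow> real) \<Rightarrow> real^'n^'n \<Rightarrow> real^'n^'n" where
  "graph_filter h S = (\<Sum>k. h k *\<^sub>R mat_pow S k)"

end

theory Submission
  imports Defs
begin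


lemma norm_sq_rows: "(norm (X::real^'n^'m))^2 = (\<Sum>i\<in>UNIV. (norm (X$i))^2)"
  unfolding norm_vec_def[of X] L2_set_def by (simp add: sum_nonneg)

lemma norm_sq_vec: "(norm (x::real^'n))^2 = (\<Sum>i\<in>UNIV. (x$i)^2)"
  unfolding norm_vec_def[of x] L2_set_def by (simp add: sum_nonneg)

lemma frob_sq: "(norm (X::real^'n^'m))^2 = (\<Sum>i\<in>UNIV. \<Sum>j\<in>UNIV. (X$i$j)^2)"
  unfolding norm_sq_rows
  by (rule sum.cong[OF refl]) (simp add: norm_vec_def L2_set_def sum_nonneg)

lemma frob_transpose: "norm (transpose (X::real^'n^'m)) = norm X"
proof -
  have "(norm (transpose X))^2 = (norm X)^2"
    unfolding frob_sq transpose_def by (simp add: sum.swap[of _ "UNIV::'n set"])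
  then show ?thesis by (simp add: power2_eq_iff_nonneg)
qed

lemma orth_norm: assumes "orthogonal_matrix (P::real^'n^'n)" shows "norm (P *v v) = norm v"
proof -
  have "inner (P *v v) (P *v v) = inner v v"
    by (metis assms dot_lmul_matrix matrix_vector_mul_assoc matrix_vector_mul_lid
        orthogonal_matrix_def transpose_matrix_vector)
  then show ?thesis by (simp add: norm_eq_sqrt_inner)
qed

lemma row_mult: "((A::real^'n^'m) ** B) $ i = transpose B *v (A $ i)"
  by (auto simp: vec_eq_iff matrix_matrix_mult_def matrix_vector_mult_def transpose_def mult.commute intro!: sum.cong)

lemma frob_orth_right: assumes "orthogonal_matrix (Q::real^'n^'n)"
  shows "norm ((X::real^'n^'m) ** Q) = norm X"
proof -
  have "(norm (X ** Q))^2 = (norm X)^2"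
  proof -
    have "\<And>y. norm (transpose Q *v y) = norm y"
      using assms by (intro orth_norm) simp
    then show ?thesis unfolding norm_sq_rows row_mult by presburger
  qed
  then show ?thesis by (simp add: power2_eq_iff_nonneg)
qed

lemma frob_orth_left: assumes "orthogonal_matrix (P::real^'n^'n)"
  shows "norm (P ** (X::real^'m^'n)) = norm X"
proof -
  have "norm (P ** X) = norm (transpose (P ** X))" by (simp add: frob_transpose)
  also have "\<dots> = norm (transpose X ** transpose P)" by (simp add: matrix_transpose_mul)
  also have "\<dots> = norm (transpose X)" using assms by (simp add: frob_orth_right)
  finally show ?thesis by (simp add: frob_transpose)
qed

lemma spec_norm_alt: "spec_norm A = onorm ((*v) A)"
  unfolding spec_norm_def by simp

lemma spec_bound: "norm (A *v x) \<le> spec_norm A * norm x"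
  unfolding spec_norm_def by (rule onorm) simp

lemma spec_nonneg: "0 \<le> spec_norm A"
  unfolding spec_norm_def by (rule onorm_pos_le) simp

lemma spec_le_frob: "spec_norm (A::real^'n^'n) \<le> norm A"
  unfolding spec_norm_def
proof (rule onorm_le)
  fix x :: "real^'n"
  have "(norm (A *v x))^2 \<le> (norm A * norm x)^2"
  proof -
    have "(norm (A *v x))^2 = (\<Sum>i\<in>UNIV. (inner (A$i) x)^2)"
      unfolding norm_sq_vec by (simp add: matrix_mult_dot)
    also have "\<dots> \<le> (\<Sum>i\<in>UNIV. (norm (A$i))^2 * (norm x)^2)"
    proof (rule sum_mono)
      fix i
      have "\<bar>inner (A$i) x\<bar> \<le> norm (A$i) * norm x" by (rule Cauchy_Schwarz_ineq2)
      then have "\<bar>inner (A$i) x\<bar>^2 \<le> (norm (A$i) * norm x)^2"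
        by (meson abs_ge_zero power_mono)
      then show "(inner (A$i) x)^2 \<le> (norm (A$i))^2 * (norm x)^2"
        by (simp add: power_mult_distrib)
    qed
    also have "\<dots> = (norm A * norm x)^2"
      by (simp add: norm_sq_rows power_mult_distrib sum_distrib_right)
    finally show ?thesis .
  qed
  then show "norm (A *v x) \<le> norm A * norm x"
    by (simp add: power2_le_iff_abs_le)
qed

lemma frob_le_spec: "norm (A::real^'n^'n) \<le> sqrt (real CARD('n)) * spec_norm A"
proof -
  have "(norm A)^2 = (\<Sum>j\<in>UNIV. (norm (column j A))^2)"
  proof -
    have "\<And>j. transpose A $ j = column j A"
      by (simp add: transpose_def column_def)
    then show ?thesis using frob_transpose[of A] norm_sq_rows[of "transpose A"] by simp
  qed
  also have "\<dots> \<le> (\<Sum>j\<in>(UNIV::'n set). (spec_norm A)^2)"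
    by (rule sum_mono) (simp add: spec_norm_alt power_mono norm_column_le_onorm)
  also have "\<dots> = (sqrt (real CARD('n)) * spec_norm A)^2"
    by (simp add: power_mult_distrib)
  finally show ?thesis
    using spec_nonneg[of A] by (simp add: power2_le_iff_abs_le)
qed

lemma spec_mult: "spec_norm ((A::real^'n^'n) ** B) \<le> spec_norm A * spec_norm B"
proof -
  have "(\<lambda>x. (A ** B) *v x) = (\<lambda>x. A *v x) \<circ> (\<lambda>x. B *v x)"
    by (simp add: o_def matrix_vector_mul_assoc)
  then show ?thesis unfolding spec_norm_def
    by (metis onorm_compose matrix_vector_mul_bounded_linear)
qed

lemma spec_add: "spec_norm ((A::real^'n^'n) + B) \<le> spec_norm A + spec_norm B"
proof -
  have "(\<lambda>x. (A + B) *v x) = (\<lambda>x. A *v x + B *v x)"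
    by (simp add: matrix_vector_mult_add_rdistrib)
  then show ?thesis unfolding spec_norm_def
    by (simp add: onorm_triangle)
qed

lemma spec_uminus: "spec_norm (- (A::real^'n^'n)) = spec_norm A"
proof -
  have "(\<lambda>x. (- A) *v x) = (\<lambda>x. - (A *v x))"
    by (simp add: fun_eq_iff vec_eq_iff matrix_vector_mult_def sum_negf)
  then show ?thesis unfolding spec_norm_def by (simp add: onorm_neg)
qed

lemma spec_diff: "spec_norm ((A::real^'n^'n) - B) \<le> spec_norm A + spec_norm B"
  using spec_add[of A "-B"] by (simp add: spec_uminus)

lemma spec_orth: "orthogonal_matrix (V::real^'n^'n) \<Longrightarrow> spec_norm V \<le> 1"
  unfolding spec_norm_def by (rule onorm_le) (simp add: orth_norm)



definition diagm :: "('n \<Rightarrow> real) \<Rightarrow> real^'n^'n" where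
  "diagm d = (\<chi> i j. if i = j then d i else 0)"

lemma sym_inner: assumes "transpose A = (A::real^'n^'n)"
  shows "inner (A *v x) y = inner x (A *v y)"
  by (metis assms dot_lmul_matrix vector_transpose_matrix)

lemma quad_zero:
  fixes a b :: real
  assumes "\<And>t. 0 \<le> 2 * t * a + t^2 * b" and "a \<ge> 0"
  shows "a = 0"
proof (rule ccontr)
  assume "a \<noteq> 0" then have a: "a > 0" using assms(2) by simp
  define s where "s = a / (\<bar>b\<bar> + 1)"
  have s: "s > 0" using a by (simp add: s_def)
  have "0 \<le> 2 * (-s) * a + (-s)^2 * b" by (rule assms(1))
  then have "2 * s * a \<le> s^2 * b" by (simp add: power2_eq_square)
  then have "2 * a \<le> s * b" using s by (simp add: power2_eq_square mult.assoc)
  moreover have "s * b \<le> s * \<bar>b\<bar>" using s by (simp add: mult_left_mono)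
  moreover have "s * \<bar>b\<bar> < a"
  proof -
    have "s * \<bar>b\<bar> = a * (\<bar>b\<bar> / (\<bar>b\<bar> + 1))" by (simp add: s_def)
    also have "\<dots> < a * 1" using a by (intro mult_strict_left_mono) auto
    finally show ?thesis by simp
  qed
  ultimately show False using a by linarith
qed

lemma eigvec_exists:
  fixes A :: "real^'n^'n" and B :: "(real^'n) set"
  assumes sym: "transpose A = A"
    and eig: "\<And>b. b \<in> B \<Longrightarrow> \<exists>c. A *v b = c *\<^sub>R b"
    and x: "x \<noteq> 0" "\<And>b. b \<in> B \<Longrightarrow> inner b x = 0"
  shows "\<exists>u. norm u = 1 \<and> (\<forall>b\<in>B. inner b u = 0) \<and> (\<exists>c. A *v u = c *\<^sub>R u)"
proof -
  define W where "W = {x. \<forall>b\<in>B. inner b x = 0}"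
  have subW: "subspace W"
    unfolding subspace_def W_def by (auto simp: inner_add_right)
  have invW: "A *v y \<in> W" if "y \<in> W" for y
  proof -
    have "inner b (A *v y) = 0" if "b \<in> B" for b
    proof -
      obtain c where "A *v b = c *\<^sub>R b" using eig \<open>b \<in> B\<close> by blast
      then have "inner b (A *v y) = c * inner b y"
        by (metis sym sym_inner inner_scaleR_left)
      then show ?thesis using \<open>y \<in> W\<close> \<open>b \<in> B\<close> by (simp add: W_def)
    qed
    then show ?thesis by (simp add: W_def)
  qed
  define K where "K = W \<inter> sphere 0 1"
  have "compact K" unfolding K_def
    by (metis compact_sphere closed_subspace subW compact_Int_closed Int_commute)
  moreover have "K \<noteq> {}"
  proof -
    have "x /\<^sub>R norm x \<in> K" using x subW
      by (auto simp: K_def W_def inner_scaleR_right)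
    then show ?thesis by blast
  qed
  moreover have "continuous_on K (\<lambda>y. inner y (A *v y))"
    by (intro continuous_on_inner continuous_on_id matrix_vector_mult_linear_continuous_on)
  ultimately have "\<exists>u\<in>K. \<forall>y\<in>K. inner y (A *v y) \<le> inner u (A *v u)"
    by (rule continuous_attains_sup)
  then obtain u where uK: "u \<in> K" and umax: "\<And>y. y \<in> K \<Longrightarrow> inner y (A *v y) \<le> inner u (A *v u)"
    by blast
  define c where "c = inner u (A *v u)"
  have uW: "u \<in> W" and un: "norm u = 1" using uK by (auto simp: K_def)
  have uu: "inner u u = 1" using un by (simp add: norm_eq_1)
  define q where "q y = c * inner y y - inner y (A *v y)" for y
  have qpos: "q y \<ge> 0" if "y \<in> W" for y
  proof (cases "y = 0")
    case True then show ?thesis by (simp add: q_def)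
  next
    case False
    have "y /\<^sub>R norm y \<in> K" using that subW False
      by (auto simp: K_def subspace_scale)
    then have "inner (y /\<^sub>R norm y) (A *v (y /\<^sub>R norm y)) \<le> c"
      using umax c_def by blast
    then have "inner y (A *v y) / (norm y)^2 \<le> c"
      by (simp add: matrix_vector_mult_scaleR power2_eq_square divide_inverse mult_ac)
    then have "inner y (A *v y) \<le> c * (norm y)^2"
      using False by (simp add: divide_le_eq)
    then show ?thesis by (simp add: q_def power2_norm_eq_inner)
  qed
  define v where "v = c *\<^sub>R u - A *v u"
  have vW: "v \<in> W" unfolding v_def
    by (intro subspace_diff[OF subW] subspace_scale[OF subW] uW invW)
  have qu: "q u = 0" by (simp add: q_def uu c_def)
  have symuv: "inner u (A *v v) = inner v (A *v u)"
    using sym_inner[OF sym, of u v] by (simp add: inner_commute)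
  have exp: "q (u + t *\<^sub>R v) = q u + 2 * t * (c * inner u v - inner v (A *v u)) + t^2 * q v" for t
  proof -
    have 1: "inner (u + t *\<^sub>R v) (u + t *\<^sub>R v) = inner u u + 2 * t * inner u v + t^2 * inner v v"
      by (simp add: inner_add_left inner_add_right inner_commute[of v u] power2_eq_square algebra_simps)
    have 2: "inner (u + t *\<^sub>R v) (A *v (u + t *\<^sub>R v)) = inner u (A *v u) + 2 * t * inner v (A *v u) + t^2 * inner v (A *v v)"
      by (simp add: inner_add_left inner_add_right matrix_vector_right_distrib matrix_vector_mult_scaleR symuv power2_eq_square algebra_simps)
    show ?thesis unfolding q_def 1 2 by (simp add: algebra_simps)
  qed
  have lin: "c * inner u v - inner v (A *v u) = inner v v"
    unfolding v_def by (simp add: inner_diff_left inner_diff_right inner_commute[of "A *v u" u] algebra_simps)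
  have "0 \<le> 2 * t * inner v v + t^2 * q v" for t
  proof -
    have "u + t *\<^sub>R v \<in> W" using uW vW subW by (simp add: subspace_add subspace_scale)
    then have "0 \<le> q (u + t *\<^sub>R v)" by (rule qpos)
    then show ?thesis using exp qu lin by simp
  qed
  then have "inner v v = 0" by (rule quad_zero) simp
  then have "A *v u = c *\<^sub>R u" by (simp add: v_def)
  then show ?thesis using uW un by (auto simp: W_def)
qed

lemma orthonormal_eig_set:
  fixes A :: "real^'n^'n"
  assumes sym: "transpose A = A"
  shows "k \<le> CARD('n) \<Longrightarrow> \<exists>B. finite B \<and> card B = k \<and> pairwise orthogonal B \<and>
      (\<forall>b\<in>B. norm b = 1 \<and> (\<exists>c. A *v b = c *\<^sub>R b))"
proof (induction k)
  case 0 then show ?case by (intro exI[of _ "{}"]) auto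
next
  case (Suc k)
  then obtain B where B: "finite B" "card B = k" "pairwise orthogonal B"
      "\<forall>b\<in>B. norm b = 1 \<and> (\<exists>c. A *v b = c *\<^sub>R b)" by auto
  have "dim B \<le> card B" using B(1) by (intro dim_le_card) (auto intro: span_base)
  then have "dim B < DIM(real^'n)" using Suc.prems B(2) by simp
  then obtain x :: "real^'n" where x: "x \<noteq> 0" "\<And>y. y \<in> span B \<Longrightarrow> orthogonal x y"
    using orthogonal_to_subspace_exists[of B] by blast
  have bx: "inner b x = 0" if "b \<in> B" for b
  proof -
    have "orthogonal x b" using x(2) span_base[OF that] by blast
    then show ?thesis by (simp add: orthogonal_def inner_commute)
  qed
  have be: "\<exists>c. A *v b = c *\<^sub>R b" if "b \<in> B" for b
    using B(4) that by blast
  have "\<exists>u. norm u = 1 \<and> (\<forall>b\<in>B. inner b u = 0) \<and> (\<exists>c. A *v u = c *\<^sub>R u)"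
    by (rule eigvec_exists[OF sym be x(1) bx])
  then obtain u where u: "norm u = 1" "\<forall>b\<in>B. inner b u = 0" "\<exists>c. A *v u = c *\<^sub>R u"
    by blast
  have uB: "u \<notin> B"
  proof
    assume "u \<in> B" then have "inner u u = 0" using u(2) by blast
    then show False using u(1) by simp
  qed
  show ?case
  proof (intro exI[of _ "insert u B"] conjI)
    show "finite (insert u B)" using B by simp
    show "card (insert u B) = Suc k" using B uB by simp
    show "pairwise orthogonal (insert u B)"
      using B(3) u(2) by (auto simp: pairwise_insert orthogonal_def inner_commute)
    show "\<forall>b\<in>insert u B. norm b = 1 \<and> (\<exists>c. A *v b = c *\<^sub>R b)" using B u by auto
  qed
qed

lemma spectral:
  fixes A :: "real^'n^'n"
  assumes sym: "transpose A = A"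
  shows "\<exists>V d. orthogonal_matrix V \<and> A = V ** diagm d ** transpose V"
proof -
  obtain B where B: "finite B" "card B = CARD('n)" "pairwise orthogonal B"
      "\<forall>b\<in>B. norm b = 1 \<and> (\<exists>c. A *v b = c *\<^sub>R b)"
    using orthonormal_eig_set[OF sym, of "CARD('n)"] by auto
  obtain f where f: "bij_betw f (UNIV::'n set) B"
    using finite_same_card_bij[of "UNIV::'n set" B] B by auto
  have fn: "\<And>i. norm (f i) = 1" using bij_betwE[OF f] B(4) by blast
  have fo: "\<And>i j. i \<noteq> j \<Longrightarrow> orthogonal (f i) (f j)"
    using B(3) f by (auto simp: pairwise_def bij_betw_def inj_on_def)
  define V where "V = (\<chi> i j. f j $ i)"
  have V: "orthogonal_matrix V"
    by (simp add: V_def orthogonal_matrix_orthonormal_columns column_def fn fo)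
  define d where "d j = (SOME c. A *v f j = c *\<^sub>R f j)" for j
  have d: "A *v f j = d j *\<^sub>R f j" for j
    unfolding d_def by (rule someI_ex) (use bij_betwE[OF f] B(4) in blast)
  have AV: "A ** V = V ** diagm d"
  proof -
    have "(A ** V) $ i $ j = (V ** diagm d) $ i $ j" for i j
    proof -
      have "(A ** V) $ i $ j = (A *v f j) $ i"
        by (simp add: V_def matrix_matrix_mult_def matrix_vector_mult_def)
      also have "\<dots> = d j * f j $ i" using d by simp
      also have "\<dots> = (V ** diagm d) $ i $ j"
        by (simp add: V_def diagm_def matrix_matrix_mult_def if_distrib cong: if_cong)
      finally show ?thesis .
    qed
    then show ?thesis by (simp add: vec_eq_iff)
  qed
  have "A = A ** (V ** transpose V)" using V by (simp add: orthogonal_matrix_def)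
  also have "\<dots> = V ** diagm d ** transpose V" by (simp add: matrix_mul_assoc AV)
  finally show ?thesis using V by blast
qed



lemma mm_diff_left: "(A::real^'n^'n) ** (B - C) = A ** B - A ** C"
  by (simp add: vec_eq_iff matrix_matrix_mult_def sum_subtractf right_diff_distrib)

lemma mm_diff_right: "((A::real^'n^'n) - B) ** C = A ** C - B ** C"
  by (simp add: vec_eq_iff matrix_matrix_mult_def sum_subtractf left_diff_distrib)

lemma mm_add_right: "((A::real^'n^'n) + B) ** C = A ** C + B ** C"
  by (simp add: vec_eq_iff matrix_matrix_mult_def sum.distrib distrib_right)

lemma diagm_nth: "diagm d $ i $ j = (if i = j then d i else 0)"
  by (simp add: diagm_def)

lemma diagm_mult: "diagm a ** diagm b = diagm (\<lambda>i. a i * b i)"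
proof -
  have "(diagm a ** diagm b) $ i $ j = diagm (\<lambda>i. a i * b i) $ i $ j" for i j
  proof -
    have "(diagm a ** diagm b) $ i $ j = (\<Sum>k\<in>UNIV. diagm a $ i $ k * diagm b $ k $ j)"
      by (simp add: matrix_matrix_mult_def)
    also have "\<dots> = (\<Sum>k\<in>UNIV. (if i = k then a i * diagm b $ k $ j else 0))"
      by (rule sum.cong) (auto simp: diagm_nth[of a])
    also have "\<dots> = a i * diagm b $ i $ j" by simp
    finally show ?thesis by (simp add: diagm_def)
  qed
  then show ?thesis by (simp add: vec_eq_iff)
qed

lemma diagm_one: "diagm (\<lambda>i. 1) = mat 1"
  by (simp add: vec_eq_iff diagm_def mat_def)

lemma orthD: assumes "orthogonal_matrix V"
  shows "transpose V ** V = mat 1" "V ** transpose V = mat 1"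
  using assms by (auto simp: orthogonal_matrix_def)

lemma mat_pow_diag:
  assumes V: "orthogonal_matrix V"
  shows "mat_pow (V ** diagm l ** transpose V) k = V ** diagm (\<lambda>i. l i ^ k) ** transpose V"
proof (induction k)
  case 0 then show ?case using V by (simp add: diagm_one orthD)
next
  case (Suc k)
  have "V ** diagm l ** transpose V ** (V ** diagm (\<lambda>i. l i ^ k) ** transpose V)
      = V ** diagm l ** (transpose V ** V) ** diagm (\<lambda>i. l i ^ k) ** transpose V"
    by (simp add: matrix_mul_assoc)
  also have "\<dots> = V ** (diagm l ** diagm (\<lambda>i. l i ^ k)) ** transpose V"
    using V by (simp add: orthD matrix_mul_assoc)
  also have "\<dots> = V ** diagm (\<lambda>i. l i ^ Suc k) ** transpose V"
    by (simp add: diagm_mult)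
  finally show ?case using Suc by simp
qed

lemma mdm_entry: "(V ** diagm d ** W) $ r $ s = (\<Sum>k\<in>UNIV. V$r$k * d k * W$k$s)"
  by (simp add: matrix_matrix_mult_def diagm_def if_distrib if_distribR sum_distrib_right cong: if_cong)

definition ei :: "'n \<Rightarrow> 'n \<Rightarrow> real" where "ei i = (\<lambda>j. if j = i then 1 else 0)"

lemma mdm_expand: "V ** diagm d ** W = (\<Sum>i\<in>UNIV. d i *\<^sub>R (V ** diagm (ei i) ** W))"
proof -
  have "(V ** diagm d ** W) $ r $ s = (\<Sum>i\<in>UNIV. d i *\<^sub>R (V ** diagm (ei i) ** W)) $ r $ s" for r s
  proof -
    have "(\<Sum>i\<in>UNIV. d i *\<^sub>R (V ** diagm (ei i) ** W)) $ r $ s = (\<Sum>i\<in>UNIV. d i * (V ** diagm (ei i) ** W) $ r $ s)"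
      by simp
    also have "\<dots> = (\<Sum>i\<in>UNIV. d i * (V$r$i * W$i$s))"
      by (simp only: mdm_entry) (simp add: ei_def if_distrib if_distribR cong: if_cong)
    finally show ?thesis by (simp add: mdm_entry mult_ac)
  qed
  then show ?thesis by (simp add: vec_eq_iff)
qed

lemma graph_filter_diag:
  assumes V: "orthogonal_matrix V" and h_conv: "\<And>t. summable (\<lambda>k. h k * t ^ k)"
  shows "graph_filter h (V ** diagm l ** transpose V) = V ** diagm (\<lambda>i. freq_resp h (l i)) ** transpose V"
proof -
  have eq: "h k *\<^sub>R mat_pow (V ** diagm l ** transpose V) k
     = (\<Sum>i\<in>UNIV. (h k * l i ^ k) *\<^sub>R (V ** diagm (ei i) ** transpose V))" for k
  proof -
    have "h k *\<^sub>R mat_pow (V ** diagm l ** transpose V) k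
        = h k *\<^sub>R (\<Sum>i\<in>UNIV. (l i ^ k) *\<^sub>R (V ** diagm (ei i) ** transpose V))"
    proof -
      have m: "V ** diagm (\<lambda>i. l i ^ k) ** transpose V = (\<Sum>i\<in>UNIV. (l i ^ k) *\<^sub>R (V ** diagm (ei i) ** transpose V))"
        by (rule mdm_expand)
      show ?thesis by (simp only: mat_pow_diag[OF V] m)
    qed
    also have "\<dots> = (\<Sum>i\<in>UNIV. (h k * l i ^ k) *\<^sub>R (V ** diagm (ei i) ** transpose V))"
      by (simp add: scaleR_sum_right)
    finally show ?thesis .
  qed
  have "(\<lambda>k. h k *\<^sub>R mat_pow (V ** diagm l ** transpose V) k) sums
      (\<Sum>i\<in>UNIV. freq_resp h (l i) *\<^sub>R (V ** diagm (ei i) ** transpose V))"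
    unfolding eq
  proof (rule sums_sum)
    fix i
    have "(\<lambda>k. h k * l i ^ k) sums freq_resp h (l i)"
      unfolding freq_resp_def using h_conv by (rule summable_sums)
    then show "(\<lambda>k. (h k * l i ^ k) *\<^sub>R (V ** diagm (ei i) ** transpose V)) sums
        (freq_resp h (l i) *\<^sub>R (V ** diagm (ei i) ** transpose V))"
      by (rule sums_scaleR_left)
  qed
  then have "graph_filter h (V ** diagm l ** transpose V) = (\<Sum>i\<in>UNIV. freq_resp h (l i) *\<^sub>R (V ** diagm (ei i) ** transpose V))"
    unfolding graph_filter_def by (rule sums_unique[symmetric])
  also have "\<dots> = V ** diagm (\<lambda>i. freq_resp h (l i)) ** transpose V"
    by (rule mdm_expand[symmetric])
  finally show ?thesis .
qed

lemma lip_frob: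
  assumes V: "orthogonal_matrix V" and Q: "orthogonal_matrix Q"
    and lip: "\<And>s t. \<bar>f s - f t\<bar> \<le> C * \<bar>s - t\<bar>"
  shows "norm (V ** diagm (\<lambda>i. f (a i)) ** transpose V - Q ** diagm (\<lambda>i. f (b i)) ** transpose Q)
      \<le> C * norm (V ** diagm a ** transpose V - Q ** diagm b ** transpose Q)"
proof -
  have C: "C \<ge> 0" using lip[of 1 0] by simp
  define R where "R = transpose V ** Q"
  have key: "transpose V ** (V ** diagm d ** transpose V - Q ** diagm e ** transpose Q) ** Q
      = diagm d ** R - R ** diagm e" for d e
  proof -
    have "transpose V ** (V ** diagm d ** transpose V - Q ** diagm e ** transpose Q) ** Q
       = (transpose V ** V) ** diagm d ** (transpose V ** Q) - (transpose V ** Q) ** diagm e ** (transpose Q ** Q)"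
      by (simp add: mm_diff_left mm_diff_right matrix_mul_assoc)
    then show ?thesis using V Q by (simp add: orthD R_def)
  qed
  have nrm: "norm X = norm (transpose V ** X ** Q)" for X
    using V Q by (simp add: frob_orth_left frob_orth_right)
  have ent: "(diagm d ** R - R ** diagm e) $ i $ j = (d i - e j) * R $ i $ j" for d e i j
    by (simp add: matrix_matrix_mult_def diagm_def if_distrib if_distribR algebra_simps cong: if_cong)
  have "(norm (diagm (\<lambda>i. f (a i)) ** R - R ** diagm (\<lambda>i. f (b i))))^2
      \<le> (C * norm (diagm a ** R - R ** diagm b))^2"
  proof -
    have "(norm (diagm (\<lambda>i. f (a i)) ** R - R ** diagm (\<lambda>i. f (b i))))^2
        = (\<Sum>i\<in>UNIV. \<Sum>j\<in>UNIV. ((f (a i) - f (b j)) * R$i$j)^2)"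
      by (simp only: frob_sq ent)
    also have "\<dots> \<le> (\<Sum>i\<in>UNIV. \<Sum>j\<in>UNIV. C^2 * ((a i - b j) * R$i$j)^2)"
    proof (intro sum_mono)
      fix i j
      have "\<bar>f (a i) - f (b j)\<bar> \<le> C * \<bar>a i - b j\<bar>" by (rule lip)
      then have "\<bar>f (a i) - f (b j)\<bar>^2 \<le> (C * \<bar>a i - b j\<bar>)^2"
        by (meson abs_ge_zero power_mono)
      then have "(f (a i) - f (b j))^2 * (R$i$j)^2 \<le> (C * \<bar>a i - b j\<bar>)^2 * (R$i$j)^2"
        by (simp add: mult_right_mono)
      then show "((f (a i) - f (b j)) * R$i$j)^2 \<le> C^2 * ((a i - b j) * R$i$j)^2"
        by (simp add: power_mult_distrib mult.assoc)
    qed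
    also have "\<dots> = (C * norm (diagm a ** R - R ** diagm b))^2"
      unfolding power_mult_distrib[of C] frob_sq ent by (simp add: power_mult_distrib sum_distrib_left)
    finally show ?thesis .
  qed
  then have "norm (diagm (\<lambda>i. f (a i)) ** R - R ** diagm (\<lambda>i. f (b i)))
      \<le> C * norm (diagm a ** R - R ** diagm b)"
    using C by (simp add: power2_le_iff_abs_le)
  moreover have "norm (V ** diagm (\<lambda>i. f (a i)) ** transpose V - Q ** diagm (\<lambda>i. f (b i)) ** transpose Q)
      = norm (diagm (\<lambda>i. f (a i)) ** R - R ** diagm (\<lambda>i. f (b i)))"
    using nrm[of "V ** diagm (\<lambda>i. f (a i)) ** transpose V - Q ** diagm (\<lambda>i. f (b i)) ** transpose Q"]
      key[of "\<lambda>i. f (a i)" "\<lambda>i. f (b i)"] by (metis (no_types))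
  moreover have "norm (V ** diagm a ** transpose V - Q ** diagm b ** transpose Q)
      = norm (diagm a ** R - R ** diagm b)"
    using nrm[of "V ** diagm a ** transpose V - Q ** diagm b ** transpose Q"]
      key[of a b] by (metis (no_types))
  ultimately show ?thesis by simp
qed



lemma diag_eq: "diagonal_mat L \<Longrightarrow> L = diagm (\<lambda>i. L $ i $ i)"
  by (auto simp: vec_eq_iff diagonal_mat_def diagm_def)

lemma diagm_diff: "diagm a - diagm b = diagm (\<lambda>i. a i - b i)"
  by (simp add: vec_eq_iff diagm_def)

lemma transpose_diff: "transpose ((A::real^'n^'n) - B) = transpose A - transpose B"
  by (simp add: vec_eq_iff transpose_def)

lemma perm_mat_orth: assumes p: "p permutes (UNIV::'n set)"
  shows "orthogonal_matrix (perm_mat p :: real^'n^'n)"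
proof -
  have "(transpose (perm_mat p) ** perm_mat p :: real^'n^'n) $ i $ j = mat 1 $ i $ j" for i j
  proof -
    have "(transpose (perm_mat p) ** perm_mat p :: real^'n^'n) $ i $ j
        = (\<Sum>k\<in>UNIV. (perm_mat p :: real^'n^'n) $ k $ i * (perm_mat p :: real^'n^'n) $ k $ j)"
      by (simp add: matrix_matrix_mult_def transpose_def)
    also have "\<dots> = (\<Sum>k\<in>UNIV. if k = p i then (if k = p j then 1 else 0) else 0)"
      by (rule sum.cong) (simp_all add: perm_mat_def)
    also have "\<dots> = (if p i = p j then 1 else 0)" by simp
    also have "\<dots> = mat 1 $ i $ j"
      using permutes_inj[OF p] by (auto simp: mat_def inj_def)
    finally show ?thesis .
  qed
  then show ?thesis by (simp add: orthogonal_matrix vec_eq_iff)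
qed

lemma perm_mat_transpose: assumes p: "p permutes (UNIV::'n set)"
  shows "transpose (perm_mat p :: real^'n^'n) = perm_mat (inv p)"
proof -
  have e: "(i = inv p j) = (j = p i)" for i j using permutes_inv_eq[OF p] by metis
  show ?thesis by (simp add: vec_eq_iff transpose_def perm_mat_def e)
qed

lemma perm_mats_transpose: "P \<in> perm_mats \<Longrightarrow> transpose P \<in> perm_mats"
  unfolding perm_mats_def using perm_mat_transpose permutes_inv by blast

lemma perm_mats_orth: "P \<in> perm_mats \<Longrightarrow> orthogonal_matrix P"
  unfolding perm_mats_def using perm_mat_orth by blast

lemma finite_perm_mats: "finite (perm_mats :: (real^'n^'n) set)"
proof -
  have "perm_mats = (perm_mat :: _ \<Rightarrow> real^'n^'n) ` {p. p permutes (UNIV::'n set)}"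
    unfolding perm_mats_def by blast
  moreover have "finite {p::'n\<Rightarrow>'n. p permutes (UNIV::'n set)}"
    by (rule finite_permutations) simp
  ultimately show ?thesis by (metis finite_imageI)
qed

lemma diagm_mv: "(diagm d *v x) $ i = d i * x $ i"
proof -
  have "(diagm d *v x) $ i = (\<Sum>j\<in>UNIV. if i = j then d i * x $ j else 0)"
    unfolding matrix_vector_mult_def vec_lambda_beta by (rule sum.cong) (simp_all add: diagm_nth)
  also have "\<dots> = d i * x $ i" by simp
  finally show ?thesis .
qed

lemma spec_diag: assumes "\<And>i. \<bar>d i\<bar> \<le> K"
  shows "spec_norm (diagm d :: real^'n^'n) \<le> K"
  unfolding spec_norm_def
proof (rule onorm_le)
  fix x :: "real^'n"
  have K: "K \<ge> 0" using assms[of undefined] by simp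
  have "(norm (diagm d *v x))^2 = (\<Sum>i\<in>UNIV. (d i * x $ i)^2)"
    unfolding norm_sq_vec diagm_mv ..
  also have "\<dots> \<le> (\<Sum>i\<in>UNIV. K^2 * (x $ i)^2)"
  proof (rule sum_mono)
    fix i
    have "\<bar>d i\<bar>^2 \<le> K^2" using assms[of i] by (meson abs_ge_zero power_mono)
    then show "(d i * x $ i)^2 \<le> K^2 * (x $ i)^2"
      by (simp add: power_mult_distrib mult_right_mono)
  qed
  also have "\<dots> = (K * norm x)^2"
    by (simp add: norm_sq_vec power_mult_distrib sum_distrib_left)
  finally show "norm (diagm d *v x) \<le> K * norm x"
    using K by (simp add: power2_le_iff_abs_le)
qed

lemma spec_conj: assumes "orthogonal_matrix V"
  shows "spec_norm (V ** D ** transpose V) \<le> spec_norm (D::real^'n^'n)"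
proof -
  have "spec_norm (V ** D ** transpose V) \<le> spec_norm (V ** D) * spec_norm (transpose V)"
    by (rule spec_mult)
  also have "\<dots> \<le> spec_norm (V ** D) * 1"
    using assms by (intro mult_left_mono spec_orth spec_nonneg) simp
  also have "\<dots> \<le> spec_norm V * spec_norm D" using spec_mult by simp
  also have "\<dots> \<le> 1 * spec_norm D"
    using assms by (intro mult_right_mono spec_orth spec_nonneg)
  finally show ?thesis by simp
qed

lemma spec_transpose_le: "spec_norm (transpose A) \<le> spec_norm (A::real^'n^'n)"
  unfolding spec_norm_def[of "transpose A"]
proof (rule onorm_le)
  fix x :: "real^'n"
  let ?y = "transpose A *v x"
  have "(norm ?y)^2 = inner ?y ?y" by (simp add: power2_norm_eq_inner)
  also have "\<dots> = inner x (A *v ?y)"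
    by (metis dot_lmul_matrix transpose_matrix_vector)
  also have "\<dots> \<le> norm x * norm (A *v ?y)" by (rule norm_cauchy_schwarz)
  also have "\<dots> \<le> norm x * (spec_norm A * norm ?y)"
    by (intro mult_left_mono spec_bound) simp
  finally have *: "(norm ?y)^2 \<le> (spec_norm A * norm x) * norm ?y" by (simp add: mult_ac)
  show "norm ?y \<le> spec_norm A * norm x"
  proof (cases "norm ?y = 0")
    case True then show ?thesis using spec_nonneg[of A] by simp
  next
    case False
    then have "norm ?y > 0" by simp
    with * show ?thesis by (simp add: power2_eq_square)
  qed
qed

lemma spec_transpose: "spec_norm (transpose A) = spec_norm (A::real^'n^'n)"
  using spec_transpose_le[of A] spec_transpose_le[of "transpose A"] by simp

theorem theorem1:
  fixes S V Lam :: "real^'n^'n"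
    and h :: "nat \<Rightarrow> real" and C :: real
  assumes S_gso: "symmetric_mat S"
    and V_orth: "orthogonal_matrix V" and Lam_diag: "diagonal_mat Lam"
    and S_eig: "S = V ** Lam ** transpose V"
    and h_conv: "\<And>t. summable (\<lambda>k. h k * t ^ k)"
    and h_bdd: "\<And>t. \<bar>freq_resp h t\<bar> \<le> 1"
    and C_pos: "C > 0"
    and h_lip: "\<And>t1 t2. \<bar>freq_resp h t2 - freq_resp h t1\<bar> \<le> C * \<bar>t2 - t1\<bar>"
  shows "\<exists>K. \<forall>(Shat :: real^'n^'n) P0 E U M (\<epsilon> :: real).
    symmetric_mat Shat \<longrightarrow>
    P0 \<in> perm_mats \<longrightarrow>
    (\<forall>P\<in>perm_mats. spec_norm (S - transpose P0 ** Shat ** P0) \<le> spec_norm (S - transpose P ** Shat ** P)) \<longrightarrow>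
    E = S - transpose P0 ** Shat ** P0 \<longrightarrow>
    orthogonal_matrix U \<longrightarrow> diagonal_mat M \<longrightarrow> E = U ** M ** transpose U \<longrightarrow>
    perm_dist S Shat = spec_norm E \<longrightarrow> spec_norm E \<le> \<epsilon> \<longrightarrow>
    perm_dist (graph_filter h S) (graph_filter h Shat)
      \<le> C * (1 + ((spec_norm (U - V) + 1)\<^sup>2 - 1) * sqrt (real CARD('n))) * \<epsilon> + K * \<epsilon>\<^sup>2"
proof (intro exI[of _ 0] allI impI)
  fix Shat P0 E U M :: "real^'n^'n" and \<epsilon> :: real
  assume Sh: "symmetric_mat Shat" and P0: "P0 \<in> perm_mats"
    and E: "E = S - transpose P0 ** Shat ** P0"
    and U: "orthogonal_matrix U" and Md: "diagonal_mat M" and EU: "E = U ** M ** transpose U"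
    and Eeps: "spec_norm E \<le> \<epsilon>"
  define f where "f = freq_resp h"
  have lip: "\<bar>f s - f t\<bar> \<le> C * \<bar>s - t\<bar>" for s t
    unfolding f_def using h_lip[of t s] by (simp add: abs_minus_commute)
  define l where "l i = Lam $ i $ i" for i
  define m where "m i = M $ i $ i" for i
  have Leq: "Lam = diagm l" unfolding l_def by (rule diag_eq[OF Lam_diag])
  have Seq: "S = V ** diagm l ** transpose V"
    using S_eig unfolding Leq .
  have Meq: "M = diagm m" unfolding m_def by (rule diag_eq[OF Md])
  obtain W g where W: "orthogonal_matrix W" and Wg: "Shat = W ** diagm g ** transpose W"
    using spectral[of Shat] Sh by (auto simp: symmetric_mat_def)
  have P0o: "orthogonal_matrix P0" using P0 by (rule perm_mats_orth)
  define Q where "Q = transpose P0 ** W"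
  have Q: "orthogonal_matrix Q" unfolding Q_def using P0o W by (simp add: orthogonal_matrix_mul)
  have conjQ: "transpose P0 ** (W ** D ** transpose W) ** P0 = Q ** D ** transpose Q" for D
    by (simp add: Q_def matrix_transpose_mul matrix_mul_assoc)
  define HS where "HS = graph_filter h S"
  define HSh where "HSh = graph_filter h Shat"
  have HSeq: "HS = V ** diagm (\<lambda>i. f (l i)) ** transpose V"
    unfolding HS_def Seq f_def by (rule graph_filter_diag[OF V_orth h_conv])
  have HSheq: "HSh = W ** diagm (\<lambda>i. f (g i)) ** transpose W"
    unfolding HSh_def Wg f_def by (rule graph_filter_diag[OF W h_conv])
  define T where "T = V ** diagm (\<lambda>i. l i - m i) ** transpose V"
  define HT where "HT = V ** diagm (\<lambda>i. f (l i - m i)) ** transpose V"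
  define G where "G = transpose P0 ** HSh ** P0"
  have Geq: "G = Q ** diagm (\<lambda>i. f (g i)) ** transpose Q"
    unfolding G_def HSheq by (rule conjQ)
  have Beq: "transpose P0 ** Shat ** P0 = Q ** diagm g ** transpose Q"
    unfolding Wg by (rule conjQ)
  have nE: "0 \<le> spec_norm E" by (rule spec_nonneg)
  have mM: "\<bar>m i\<bar> \<le> spec_norm E" for i
  proof -
    have "\<bar>m i\<bar> \<le> spec_norm M"
      unfolding m_def spec_norm_alt by (rule matrix_component_le_onorm)
    also have "M = transpose U ** E ** U"
    proof -
      have "transpose U ** (U ** M ** transpose U) ** U = (transpose U ** U) ** M ** (transpose U ** U)"
        by (simp add: matrix_mul_assoc)
      then show ?thesis using U unfolding EU by (simp add: orthD)
    qed
    then have "spec_norm M \<le> spec_norm E"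
      using spec_conj[of "transpose U" E] U by simp
    finally show ?thesis .
  qed
  have MM: "spec_norm M \<le> spec_norm E"
  proof -
    have "M = transpose U ** E ** U"
    proof -
      have "transpose U ** (U ** M ** transpose U) ** U = (transpose U ** U) ** M ** (transpose U ** U)"
        by (simp add: matrix_mul_assoc)
      then show ?thesis using U unfolding EU by (simp add: orthD)
    qed
    then show ?thesis using spec_conj[of "transpose U" E] U by simp
  qed
  have b1: "spec_norm (HS - HT) \<le> C * spec_norm E"
  proof -
    have "HS - HT = V ** diagm (\<lambda>i. f (l i) - f (l i - m i)) ** transpose V"
      unfolding HSeq HT_def by (simp only: mm_diff_left[symmetric] mm_diff_right[symmetric] diagm_diff)
    moreover have "spec_norm (diagm (\<lambda>i. f (l i) - f (l i - m i)) :: real^'n^'n) \<le> C * spec_norm E"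
    proof (rule spec_diag)
      fix i
      have "\<bar>f (l i) - f (l i - m i)\<bar> \<le> C * \<bar>m i\<bar>" using lip[of "l i" "l i - m i"] by simp
      also have "\<dots> \<le> C * spec_norm E" using mM[of i] C_pos by simp
      finally show "\<bar>f (l i) - f (l i - m i)\<bar> \<le> C * spec_norm E" .
    qed
    ultimately show ?thesis using spec_conj[OF V_orth] order_trans by metis
  qed
  define d where "d = spec_norm (U - V)"
  have d0: "0 \<le> d" unfolding d_def by (rule spec_nonneg)
  have TB: "T - transpose P0 ** Shat ** P0 = V ** M ** transpose (U - V) + (U - V) ** M ** transpose U"
  proof -
    have "S - T = V ** M ** transpose V"
      unfolding Seq T_def Meq by (simp only: mm_diff_left[symmetric] mm_diff_right[symmetric] diagm_diff) simp
    then have "T - transpose P0 ** Shat ** P0 = E - V ** M ** transpose V"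
      using E by (simp add: algebra_simps)
    also have "\<dots> = V ** M ** transpose (U - V) + (U - V) ** M ** transpose U"
      unfolding EU transpose_diff by (simp add: mm_diff_left mm_diff_right algebra_simps)
    finally show ?thesis .
  qed
  have sTB: "spec_norm (T - transpose P0 ** Shat ** P0) \<le> 2 * d * spec_norm E"
  proof -
    have V1: "spec_norm V \<le> 1" "spec_norm (transpose U) \<le> 1"
      using V_orth U by (auto intro: spec_orth)
    have td: "spec_norm (transpose (U - V)) = d"
    proof -
      show ?thesis unfolding d_def by (rule spec_transpose)
    qed
    have "spec_norm (V ** M ** transpose (U - V)) \<le> spec_norm (V ** M) * d"
      using spec_mult[of "V ** M" "transpose (U - V)"] td by simp
    also have "\<dots> \<le> (spec_norm V * spec_norm M) * d"
      using spec_mult d0 by (intro mult_right_mono) auto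
    also have "\<dots> \<le> (1 * spec_norm E) * d"
      using V1 MM d0 spec_nonneg[of M] spec_nonneg[of V]
      by (intro mult_right_mono mult_mono) auto
    finally have t1: "spec_norm (V ** M ** transpose (U - V)) \<le> d * spec_norm E" by (simp add: mult.commute)
    have "spec_norm ((U - V) ** M ** transpose U) \<le> spec_norm ((U - V) ** M) * spec_norm (transpose U)"
      by (rule spec_mult)
    also have "\<dots> \<le> spec_norm ((U - V) ** M) * 1"
      using V1 spec_nonneg by (intro mult_left_mono) auto
    also have "\<dots> \<le> d * spec_norm M" using spec_mult d_def by simp
    also have "\<dots> \<le> d * spec_norm E" using MM d0 by (intro mult_left_mono)
    finally have t2: "spec_norm ((U - V) ** M ** transpose U) \<le> d * spec_norm E" by simp
    show ?thesis unfolding TB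
      using spec_add[of "V ** M ** transpose (U - V)" "(U - V) ** M ** transpose U"] t1 t2 by linarith
  qed
  have b2: "spec_norm (HT - G) \<le> C * sqrt (real CARD('n)) * (2 * d * spec_norm E)"
  proof -
    have "spec_norm (HT - G) \<le> norm (HT - G)" by (rule spec_le_frob)
    also have "\<dots> \<le> C * norm (T - transpose P0 ** Shat ** P0)"
      unfolding HT_def Geq Beq T_def by (rule lip_frob[OF V_orth Q lip])
    also have "\<dots> \<le> C * (sqrt (real CARD('n)) * spec_norm (T - transpose P0 ** Shat ** P0))"
      using C_pos frob_le_spec by (intro mult_left_mono) auto
    also have "\<dots> \<le> C * (sqrt (real CARD('n)) * (2 * d * spec_norm E))"
      using C_pos sTB by (intro mult_left_mono) auto
    finally show ?thesis by (simp add: mult.assoc)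
  qed
  have main: "spec_norm (HS - G) \<le> C * (1 + ((d + 1)^2 - 1) * sqrt (real CARD('n))) * spec_norm E"
  proof -
    have "HS - G = (HS - HT) + (HT - G)" by simp
    then have "spec_norm (HS - G) \<le> C * spec_norm E + C * sqrt (real CARD('n)) * (2 * d * spec_norm E)"
      using spec_add[of "HS - HT" "HT - G"] b1 b2 by simp
    also have "\<dots> \<le> C * (1 + ((d + 1)^2 - 1) * sqrt (real CARD('n))) * spec_norm E"
    proof -
      have "2 * d \<le> (d + 1)^2 - 1" using d0 by (simp add: power2_eq_square algebra_simps)
      then have "C * sqrt (real CARD('n)) * (2 * d * spec_norm E) \<le> C * sqrt (real CARD('n)) * (((d + 1)^2 - 1) * spec_norm E)"
        using C_pos nE by (intro mult_left_mono mult_right_mono) auto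
      then show ?thesis by (simp add: algebra_simps)
    qed
    finally show ?thesis .
  qed
  have pd: "perm_dist HS HSh \<le> spec_norm (HS - G)"
  proof -
    let ?F = "\<lambda>P. onorm (\<lambda>x. transpose P *v (HS *v x) - HSh *v (transpose P *v x))"
    have "perm_dist HS HSh \<le> ?F (transpose P0)"
      unfolding perm_dist_def
      by (rule Min_le[OF finite_imageI[OF finite_perm_mats] imageI[OF perm_mats_transpose[OF P0]]])
    also have "\<dots> \<le> spec_norm (HS - G)"
    proof (simp only: transpose_transpose, rule onorm_le)
      fix x
      have "P0 *v (HS *v x) - HSh *v (P0 *v x) = P0 *v ((HS - G) *v x)"
        using P0o unfolding G_def
        by (simp add: matrix_vector_mult_diff_rdistrib matrix_vector_mult_diff_distrib
            matrix_vector_mul_assoc matrix_mul_assoc orthD)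
      then show "norm (P0 *v (HS *v x) - HSh *v (P0 *v x)) \<le> spec_norm (HS - G) * norm x"
        using orth_norm[OF P0o] spec_bound by simp
    qed
    finally show ?thesis .
  qed
  have "perm_dist (graph_filter h S) (graph_filter h Shat)
      \<le> C * (1 + ((d + 1)^2 - 1) * sqrt (real CARD('n))) * \<epsilon>"
  proof -
    have "0 \<le> C * (1 + ((d + 1)^2 - 1) * sqrt (real CARD('n)))"
      using C_pos d0 by (intro mult_nonneg_nonneg add_nonneg_nonneg) (auto simp: power2_eq_square algebra_simps)
    then have "C * (1 + ((d + 1)^2 - 1) * sqrt (real CARD('n))) * spec_norm E
        \<le> C * (1 + ((d + 1)^2 - 1) * sqrt (real CARD('n))) * \<epsilon>"
      using Eeps by (intro mult_left_mono)
    then show ?thesis using pd main unfolding HS_def HSh_def by linarith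
  qed
  then show "perm_dist (graph_filter h S) (graph_filter h Shat)
      \<le> C * (1 + ((spec_norm (U - V) + 1)\<^sup>2 - 1) * sqrt (real CARD('n))) * \<epsilon> + 0 * \<epsilon>\<^sup>2"
    by (simp add: d_def)
qed


end
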